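(* Let $0<v_T<\tfrac12$ and $V_u>v_T$, and put $$k_{\rm peak}=\frac{V_u}{v_T}-1,\qquad g_{\rm peak}=\frac{F'(v_T)\,v_T}{V_u}.$$ Then: (a) for every $g>0$ and $k\ge 0$ such that the central cell fires when $v_u$ is raised from $0$ to $V_u$, one has $k<k_{\rm peak}$; (b) for $g=g_{\rm peak}$ and $k\ge0$, the central cell fires when $v_u$ is raised from $0$ to $V_u$ if and only if $k<k_{\rm peak}$. In particular, the supremum over all $g>0$ of $\sup\{k\ge 0:\ \text{the cell fires with parameters }(g,k)\}$ equals $k_{\rm peak}$ and is attained at $g=g_{\rm peak}$.
   Context: Fix $v_T\in(0,\tfrac12)$ and let $F(v)=v(v-v_T)(1-v)$, with local minimum at $v_{\min}$, local maximum at $v_{\max}$, inflection point $v_i=(1+v_T)/3$; $0<v_{\min}<v_T<v_i<v_{\max}<1$. Central-cell model: for $g>0$, real $k\ge0$ and upstream voltage $v_u$, $\frac{dv}{dt}=F(v)+g(v_u-v)-gkv$; equilibria solve $F(v)=g(k+1)v-gv_u$. Firing: given $V_u>0$, the central cell fires when $v_u$ is raised from $0$ to $V_u$ if there exist $v_{u,c}\in(0,V_u)$ and $v^*\in(v_{\min},v_i)$ with $F(v^* )=g(k+1)v^*-gv_{u,c}$ and $F'(v^* )=g(k+1)$ (a saddle-node collision of the rest and threshold equilibria). *)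

theory Defs
  imports "HOL-Analysis.Analysis"
begin

definition F :: "real \<Rightarrow> real \<Rightarrow> real" where
  "F vT v = v * (v - vT) * (1 - v)"

text \<open>Local minimum of F: the smaller critical point (smaller root of F' = 0).\<close>
definition v_min :: "real \<Rightarrow> real" where
  "v_min vT = ((1 + vT) - sqrt ((1 + vT)^2 - 3 * vT)) / 3"

text \<open>Inflection point of F.\<close>
definition v_i :: "real \<Rightarrow> real" where
  "v_i vT = (1 + vT) / 3"

text \<open>Firing: a saddle-node collision of rest and threshold equilibria occurs for
  some intermediate upstream voltage v_uc in (0, Vu).\<close>
definition fires :: "real \<Rightarrow> real \<Rightarrow> real \<Rightarrow> real \<Rightarrow> bool" where
  "fires vT g k Vu \<longleftrightarrow>
     (\<exists>vuc v. 0 < vuc \<and> vuc < Vu \<and> v_min vT < v \<and> v < v_i vT \<and>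
        F vT v = g * (k + 1) * v - g * vuc \<and>
        deriv (F vT) v = g * (k + 1))"

end

theory Submission
  imports Defs
begin

lemma derF: "deriv (F a) v = -3 * v^2 + 2 * (1+a) * v - a"
proof -
  have "(F a has_real_derivative (-3 * v^2 + 2 * (1+a) * v - a)) (at v)"
    unfolding F_def[abs_def]
    by (auto intro!: derivative_eq_intros simp: power2_eq_square algebra_simps)
  thus ?thesis by (rule DERIV_imp_deriv)
qed

lemma vmin_pos: "0 < a \<Longrightarrow> a < 1/2 \<Longrightarrow> 0 < v_min a \<and> v_min a < a \<and>
   -3 * (v_min a)^2 + 2 * (1+a) * (v_min a) - a = 0"
proof -
  assume a: "0 < a" "a < 1/2"
  define s where "s = sqrt ((1 + a)^2 - 3 * a)"
  have pos: "(1 + a)^2 - 3 * a > 0" using a proof -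
    have "(1 + a)^2 - 3 * a = (a - 1/2)^2 + 3/4" by (simp add: power2_eq_square algebra_simps)
    thus ?thesis using zero_le_power2[of "a-1/2"] by linarith
  qed
  have s2: "s^2 = (1 + a)^2 - 3 * a" using real_sqrt_pow2[OF less_imp_le[OF pos]] s_def by simp
  have s0: "s \<ge> 0" unfolding s_def using pos by (intro real_sqrt_ge_zero) linarith
  have "s < 1 + a" using s2 s0 a by (smt (verit) power_mono)
  moreover have "1 - 2 * a < s"
  proof -
    have "s^2 - (1-2 * a)^2 = 3 * a * (1-a)" using s2 by (simp add: power2_eq_square algebra_simps)
    moreover have "3 * a * (1-a) > 0" using a by simp
    ultimately have "(1-2 * a)^2 < s^2" by linarith
    thus ?thesis using s0 by (smt (verit) power_mono)
  qed
  moreover have "-3 * ((1+a-s)/3)^2 + 2 * (1+a) * ((1+a-s)/3) - a = 0"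
    using s2 by (simp add: power2_eq_square field_simps)
  ultimately show ?thesis unfolding v_min_def s_def[symmetric] by auto
qed

theorem mainTheorem3:
  fixes vT Vu :: real
  assumes "0 < vT" and "vT < 1/2" and "Vu > vT"
  defines "k_peak \<equiv> Vu / vT - 1"
      and "g_peak \<equiv> deriv (F vT) vT * vT / Vu"
  shows "(\<forall>g k. g > 0 \<longrightarrow> k \<ge> 0 \<longrightarrow> fires vT g k Vu \<longrightarrow> k < k_peak)
       \<and> (\<forall>k. k \<ge> 0 \<longrightarrow> (fires vT g_peak k Vu \<longleftrightarrow> k < k_peak))
       \<and> Sup {k. k \<ge> 0 \<and> (\<exists>g>0. fires vT g k Vu)} = k_peak
       \<and> Sup {k. k \<ge> 0 \<and> fires vT g_peak k Vu} = k_peak"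
proof -
  let ?a = vT
  have a0: "0 < ?a" and a1: "?a < 1/2" and Vu: "Vu > ?a" using assms by auto
  have Vu0: "Vu > 0" using a0 Vu by linarith
  have PA: "k < k_peak" if g: "g > 0" and f: "fires vT g k Vu" for g k
  proof -
    from f obtain vuc v where h: "0 < vuc" "vuc < Vu" "v_min vT < v" "v < v_i vT"
      "F vT v = g * (k + 1) * v - g * vuc" "deriv (F vT) v = g * (k + 1)"
      unfolding fires_def by blast
    have d: "-3 * v^2 + 2 * (1+?a) * v - ?a = g * (k+1)" using h(6) derF by simp
    have Fv: "v * (v-?a) * (1-v) = g * (k + 1) * v - g * vuc" using h(5) F_def by simp
    have H0: "g * vuc = (g * (k + 1)) * v - v * (v-?a) * (1-v)" using Fv by (simp add: algebra_simps)
    have H: "g * vuc = v^2 * (1+?a-2 * v)" unfolding H0 d[symmetric]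
      by (simp add: power2_eq_square algebra_simps)
    have vh: "v < 1/2" using h(4) a1 unfolding v_i_def by simp
    have key: "v^2 * (1+?a-2 * v) - ?a * (-3 * v^2 + 2 * (1+?a) * v - ?a) = (v-?a)^2 * (1-2 * v)"
      by (simp add: power2_eq_square algebra_simps)
    have "(v-?a)^2 * (1-2 * v) \<ge> 0" using vh by simp
    hence "?a * (g * (k+1)) \<le> g * vuc" using key unfolding H d by linarith
    also have "g * vuc < g * Vu" using h g by simp
    finally have "?a * (k+1) < Vu" using g by (simp add: mult.left_commute)
    thus ?thesis unfolding k_peak_def using a0 by (simp add: field_simps)
  qed
  have gp: "g_peak = ?a^2 * (1-?a)/Vu" unfolding g_peak_def derF
    by (simp add: power2_eq_square algebra_simps)
  have gp0: "g_peak > 0" using gp a0 a1 Vu0 by simp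
  have PB: "fires vT g_peak k Vu" if k: "k \<ge> 0" "k < k_peak" for k
  proof -
    let ?y = "g_peak * (k+1)"
    define D where "D = (\<lambda>v::real. -3 * v^2 + 2 * (1+?a) * v - ?a)"
    obtain vm where vm: "vm = v_min ?a" by simp
    have vmp: "0 < vm" "vm < ?a" "D vm = 0" using vmin_pos[OF a0 a1] vm D_def by auto
    have Da: "D ?a = ?a * (1-?a)" unfolding D_def by (simp add: power2_eq_square algebra_simps)
    have y0: "?y > 0" using gp0 k by simp
    have "?a * (k+1) < Vu" using k unfolding k_peak_def using a0 by (simp add: field_simps)
    hence "k+1 < Vu/?a" using a0 by (simp add: field_simps)
    hence "?y < g_peak * (Vu/?a)" using gp0 by (rule mult_strict_left_mono)
    also have "g_peak * (Vu/?a) = ?a * (1-?a)" using gp a0 Vu0 by (simp add: power2_eq_square field_simps)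
    finally have y1: "?y < D ?a" using Da by simp
    have "continuous_on {vm..?a} D" unfolding D_def by (intro continuous_intros)
    then obtain v where v: "vm \<le> v" "v \<le> ?a" "D v = ?y"
      using IVT'[of D vm ?y ?a] vmp y0 y1 by auto
    have vne: "v \<noteq> vm" "v \<noteq> ?a" using v vmp y0 y1 by auto
    have vv: "vm < v" "v < ?a" using v vne by auto
    define vuc where "vuc = v^2 * (1+?a-2 * v) / g_peak"
    have Hpos: "v^2 * (1+?a-2 * v) > 0" using vv vmp a1 by simp
    have "v^2 * (1+?a-2 * v) < ?a^2 * (1+?a-2 * ?a)"
    proof -
      have "?a^2 * (1+?a-2 * ?a) - v^2 * (1+?a-2 * v) = (?a-v) * ((1+?a) * (?a+v) - 2 * (?a^2+?a * v+v^2))"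
        by (simp add: power2_eq_square algebra_simps)
      moreover have "(1+?a) * (?a+v) - 2 * (?a^2+?a * v+v^2) > 0"
      proof -
        let ?g = "(1+?a) * (?a+v) - 2 * (?a^2+?a * v+v^2)"
        have id: "?a * ?g = (?a-v) * (?a * (1-?a)) + v * (2 * ?a * (1-2 * ?a)) + 2 * ?a * (v * (?a-v))"
          by (simp add: power2_eq_square algebra_simps)
        have p1: "(?a-v) * (?a * (1-?a)) > 0" using vv a1 a0 by simp
        have p2: "v * (2 * ?a * (1-2 * ?a)) > 0" using vv vmp a1 a0 by simp
        have p3: "2 * ?a * (v * (?a-v)) > 0" using vv vmp a0 by simp
        have "?a * ?g > 0" using id p1 p2 p3 by linarith
        thus ?thesis using a0 by (simp add: zero_less_mult_iff)
      qed
      moreover have "(?a-v) * ((1+?a) * (?a+v) - 2 * (?a^2+?a * v+v^2)) > 0"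
        using calculation(2) vv by (intro mult_pos_pos) auto
      ultimately show ?thesis by linarith
    qed
    moreover have "?a^2 * (1+?a-2 * ?a) = Vu * g_peak"
    proof -
      have "Vu * g_peak = ?a^2 * (1-?a)" unfolding gp using Vu0 by simp
      thus ?thesis by simp
    qed
    ultimately have "v^2 * (1+?a-2 * v) < Vu * g_peak" by linarith
    hence vuc1: "vuc < Vu" unfolding vuc_def using gp0 by (simp add: divide_less_eq)
    have vuc0: "vuc > 0" unfolding vuc_def using Hpos gp0 by simp
    have vi: "v < v_i ?a" unfolding v_i_def using vv a1 by simp
    have dd: "deriv (F vT) v = g_peak * (k+1)" using v(3) derF D_def by simp
    have ff: "F vT v = g_peak * (k + 1) * v - g_peak * vuc"
    proof -
      have e1: "g_peak * vuc = v^2 * (1+?a-2 * v)" unfolding vuc_def using gp0 by simp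
      have e2: "g_peak * (k + 1) = -3 * v^2 + 2 * (1+?a) * v - ?a" using v(3) D_def by simp
      show ?thesis unfolding F_def e1 e2
        by (simp add: power2_eq_square algebra_simps)
    qed
    show ?thesis unfolding fires_def using vuc0 vuc1 vv vm vi ff dd by blast
  qed
  have kp0: "k_peak > 0" unfolding k_peak_def using a0 Vu by (simp add: field_simps)
  have S1: "{k. k \<ge> 0 \<and> (\<exists>g>0. fires vT g k Vu)} = {0..<k_peak}"
  proof (intro set_eqI iffI)
    fix k assume "k \<in> {k. k \<ge> 0 \<and> (\<exists>g>0. fires vT g k Vu)}"
    then obtain g where "k \<ge> 0" "g > 0" "fires vT g k Vu" by blast
    thus "k \<in> {0..<k_peak}" using PA by simp
  next
    fix k assume "k \<in> {0..<k_peak}"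
    thus "k \<in> {k. k \<ge> 0 \<and> (\<exists>g>0. fires vT g k Vu)}" using PB gp0 by auto
  qed
  have S2: "{k. k \<ge> 0 \<and> fires vT g_peak k Vu} = {0..<k_peak}"
  proof (intro set_eqI iffI)
    fix k assume "k \<in> {k. k \<ge> 0 \<and> fires vT g_peak k Vu}"
    thus "k \<in> {0..<k_peak}" using PA gp0 by simp
  next
    fix k assume "k \<in> {0..<k_peak}"
    thus "k \<in> {k. k \<ge> 0 \<and> fires vT g_peak k Vu}" using PB by auto
  qed
  have P2: "\<forall>k. k \<ge> 0 \<longrightarrow> (fires vT g_peak k Vu \<longleftrightarrow> k < k_peak)"
    using PA PB gp0 by blast
  have P1: "\<forall>g k. g > 0 \<longrightarrow> k \<ge> 0 \<longrightarrow> fires vT g k Vu \<longrightarrow> k < k_peak"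
    using PA by blast
  show ?thesis unfolding S1 S2 using P1 P2 kp0 by simp
qed

end
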